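(* Let $\eta\in(0,1)$ be such that for every real sequence $\{\gamma_n\}_{n\in\mathbb{Z}}$ with $|\gamma_n-n|<\eta$ for all $n$, the system $E(\{\gamma_n\})$ is a Riesz basis of $L^2[0,1]$. Then there exists $\Lambda\subseteq\mathbb{Z}$ such that $E(\Lambda)$ is a Riesz basis of $L^2[0,\eta]$.
   Context: For real $\lambda$, $e_\lambda(t)=e^{2\pi i\lambda t}$, and $E(\Lambda)=\{e_\lambda\}_{\lambda\in\Lambda}$. A Riesz basis of a Hilbert space is the image of an orthonormal basis under a bounded invertible operator. *)

theory Defs
  imports "HOL-Analysis.Analysis"
begin

definition expo :: "real \<Rightarrow> real \<Rightarrow> complex" where
  "expo lam = (\<lambda>t. exp (complex_of_real (2 * pi * lam * t) * \<i>))"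

text \<open>L^2[0,a]: measurable, square-integrable complex functions on [0,a] (w.r.t. Lebesgue
  measure), considered modulo equality almost everywhere (see l2eq).\<close>
definition L2 :: "real \<Rightarrow> (real \<Rightarrow> complex) set" where
  "L2 a = {f. f \<in> borel_measurable (lebesgue_on {0..a}) \<and>
              integrable (lebesgue_on {0..a}) (\<lambda>t. (cmod (f t))\<^sup>2)}"

definition l2inner :: "real \<Rightarrow> (real \<Rightarrow> complex) \<Rightarrow> (real \<Rightarrow> complex) \<Rightarrow> complex" where
  "l2inner a f g = (LINT t | lebesgue_on {0..a}. f t * cnj (g t))"

definition l2norm :: "real \<Rightarrow> (real \<Rightarrow> complex) \<Rightarrow> real" where
  "l2norm a f = sqrt (LINT t | lebesgue_on {0..a}. (cmod (f t))\<^sup>2)"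

definition l2eq :: "real \<Rightarrow> (real \<Rightarrow> complex) \<Rightarrow> (real \<Rightarrow> complex) \<Rightarrow> bool" where
  "l2eq a f g \<longleftrightarrow> (AE t in lebesgue_on {0..a}. f t = g t)"

definition bounded_op :: "real \<Rightarrow> ((real \<Rightarrow> complex) \<Rightarrow> (real \<Rightarrow> complex)) \<Rightarrow> bool" where
  "bounded_op a T \<longleftrightarrow>
     (\<forall>f\<in>L2 a. T f \<in> L2 a) \<and>
     (\<forall>f\<in>L2 a. \<forall>g\<in>L2 a. l2eq a (T (\<lambda>t. f t + g t)) (\<lambda>t. T f t + T g t)) \<and>
     (\<forall>f\<in>L2 a. \<forall>c::complex. l2eq a (T (\<lambda>t. c * f t)) (\<lambda>t. c * T f t)) \<and>
     (\<exists>C. \<forall>f\<in>L2 a. l2norm a (T f) \<le> C * l2norm a f)"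

definition bounded_invertible_op :: "real \<Rightarrow> ((real \<Rightarrow> complex) \<Rightarrow> (real \<Rightarrow> complex)) \<Rightarrow> bool" where
  "bounded_invertible_op a T \<longleftrightarrow> bounded_op a T \<and>
     (\<exists>S. bounded_op a S \<and> (\<forall>f\<in>L2 a. l2eq a (S (T f)) f \<and> l2eq a (T (S f)) f))"

definition orthonormal_basis :: "real \<Rightarrow> 'i set \<Rightarrow> ('i \<Rightarrow> real \<Rightarrow> complex) \<Rightarrow> bool" where
  "orthonormal_basis a I u \<longleftrightarrow>
     (\<forall>i\<in>I. u i \<in> L2 a) \<and>
     (\<forall>i\<in>I. \<forall>j\<in>I. l2inner a (u i) (u j) = (if i = j then 1 else 0)) \<and>
     (\<forall>f\<in>L2 a. \<forall>\<epsilon>>0. \<exists>F c. finite F \<and> F \<subseteq> I \<and>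
        l2norm a (\<lambda>t. f t - (\<Sum>i\<in>F. c i * u i t)) < \<epsilon>)"

definition riesz_basis :: "real \<Rightarrow> 'i set \<Rightarrow> ('i \<Rightarrow> real \<Rightarrow> complex) \<Rightarrow> bool" where
  "riesz_basis a I v \<longleftrightarrow>
     (\<exists>u T. orthonormal_basis a I u \<and> bounded_invertible_op a T \<and>
            (\<forall>i\<in>I. l2eq a (T (u i)) (v i)))"

end

theory Submission imports Defs begin
lemma ind_scale:
  fixes c a s :: real assumes "c > 0"
  shows "indicat_real {0..a} (c * s) = indicat_real {0..a/c} s"
  using assms by (auto simp: indicator_def field_simps zero_le_mult_iff)

lemma meas_scale:
  fixes f :: "real \<Rightarrow> 'b::euclidean_space"
  assumes "c \<noteq> 0" "f \<in> borel_measurable lebesgue"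
  shows "(\<lambda>x. f (c*x)) \<in> borel_measurable lebesgue"
  using borel_measurable_affine[OF assms(2) assms(1), of 0] by simp

lemma AE_scale:
  fixes c :: real
  assumes c: "c \<noteq> 0" and ae: "AE x in lebesgue. P x"
  shows "AE x in lebesgue. P (c*x)"
proof -
  from ae obtain N where N: "{x \<in> space lebesgue. \<not> P x} \<subseteq> N" "emeasure lebesgue N = 0" "N \<in> sets lebesgue"
    by (rule AE_E)
  define N' where "N' = ((*\<^sub>R) c) -` N \<inter> space lebesgue"
  have m: "((*\<^sub>R) c) \<in> lebesgue \<rightarrow>\<^sub>M (lebesgue :: real measure)" by simp
  have s: "N' \<in> sets lebesgue" unfolding N'_def using measurable_sets[OF m N(3)] .
  have eq: "N' = (\<lambda>x. (1/c) *\<^sub>R x + 0) ` N"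
    using c by (auto simp: N'_def image_def) (metis mult.commute nonzero_divide_eq_eq divide_inverse mult_1)
  have "emeasure lebesgue N' = 0"
    unfolding eq using emeasure_lebesgue_affine[of "1/c" 0 N] N(2) by simp
  with s have "N' \<in> null_sets lebesgue" by auto
  moreover have "{x \<in> space lebesgue. \<not> P (c*x)} \<subseteq> N'"
    using N(1) by (auto simp: N'_def)
  ultimately show ?thesis by (rule AE_I')
qed

lemma iv_sets: "{x..(y::real)} \<in> sets lebesgue" by (simp add: borel_closed sets_completionI_sets)

lemma G1:
  fixes f :: "real \<Rightarrow> 'b::euclidean_space"
  assumes c: "c > 0" and f: "f \<in> borel_measurable (lebesgue_on {0..a})"
  shows "(\<lambda>s. f (c * s)) \<in> borel_measurable (lebesgue_on {0..a/c})"
proof -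
  have "(\<lambda>x. indicat_real {0..a} x *\<^sub>R f x) \<in> borel_measurable lebesgue"
    using f by (subst (asm) borel_measurable_restrict_space_iff) auto
  from meas_scale[OF _ this, of c] c
  have "(\<lambda>x. indicat_real {0..a/c} x *\<^sub>R f (c * x)) \<in> borel_measurable lebesgue"
    by (simp add: ind_scale)
  then show ?thesis
    by (subst borel_measurable_restrict_space_iff) auto
qed

lemma G2i:
  fixes f :: "real \<Rightarrow> 'b::euclidean_space"
  assumes c: "c > 0"
  shows "integrable (lebesgue_on {0..a}) f \<longleftrightarrow> integrable (lebesgue_on {0..a/c}) (\<lambda>s. f (c * s))"
proof -
  have "integrable (lebesgue_on {0..a}) f \<longleftrightarrow> integrable lebesgue (\<lambda>x. indicat_real {0..a} x *\<^sub>R f x)"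
    by (subst integrable_restrict_space) auto
  also have "\<dots> \<longleftrightarrow> integrable lebesgue (\<lambda>x. indicat_real {0..a} (0 + c * x) *\<^sub>R f (0 + c * x))"
    using c by (subst lebesgue_integrable_real_affine_iff) auto
  also have "\<dots> \<longleftrightarrow> integrable lebesgue (\<lambda>x. indicat_real {0..a/c} x *\<^sub>R f (c * x))"
    using c by (simp add: ind_scale)
  also have "\<dots> \<longleftrightarrow> integrable (lebesgue_on {0..a/c}) (\<lambda>s. f (c * s))"
    by (subst integrable_restrict_space) auto
  finally show ?thesis .
qed

lemma G2:
  fixes f :: "real \<Rightarrow> 'b::euclidean_space"
  assumes c: "c > 0"
  shows "(LINT x | lebesgue_on {0..a}. f x) = c *\<^sub>R (LINT s | lebesgue_on {0..a/c}. f (c * s))"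
proof -
  have "(LINT x | lebesgue_on {0..a}. f x) = (LINT x | lebesgue. indicat_real {0..a} x *\<^sub>R f x)"
    by (subst integral_restrict_space) auto
  also have "\<dots> = \<bar>c\<bar> *\<^sub>R (LINT x | lebesgue. indicat_real {0..a} (0 + c * x) *\<^sub>R f (0 + c * x))"
    using c by (subst lebesgue_integral_real_affine[of c _ 0]) auto
  also have "\<dots> = c *\<^sub>R (LINT x | lebesgue. indicat_real {0..a/c} x *\<^sub>R f (c * x))"
    using c by (simp add: ind_scale)
  also have "\<dots> = c *\<^sub>R (LINT s | lebesgue_on {0..a/c}. f (c * s))"
    by (subst integral_restrict_space) auto
  finally show ?thesis .
qed

lemma G3:
  fixes a c :: real
  assumes c: "c > 0" and ae: "AE t in lebesgue_on {0..a}. P t"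
  shows "AE s in lebesgue_on {0..a/c}. P (c * s)"
proof -
  have "AE t in lebesgue. t \<in> {0..a} \<longrightarrow> P t"
    using ae AE_restrict_space_iff[of "{0..a}" lebesgue P] iv_sets[of 0 a] by simp
  from AE_scale[OF _ this, of c] c
  have "AE s in lebesgue. c * s \<in> {0..a} \<longrightarrow> P (c * s)" by simp
  moreover have "c * s \<in> {0..a} \<longleftrightarrow> s \<in> {0..a/c}" for s
    using c by (auto simp: field_simps zero_le_mult_iff)
  ultimately have "AE s in lebesgue. s \<in> {0..a/c} \<longrightarrow> P (c * s)" by simp
  then show ?thesis
    using AE_restrict_space_iff[of "{0..a/c}" lebesgue "\<lambda>s. P (c * s)"] iv_sets[of 0 "a/c"] by simp
qed

lemma L2_scale:
  assumes c: "c > 0" and f: "f \<in> L2 a"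
  shows "(\<lambda>s. f (c * s)) \<in> L2 (a/c)"
  using f G1[OF c, where f=f and a=a] G2i[OF c, where f="\<lambda>t. (cmod (f t))\<^sup>2" and a=a] unfolding L2_def by auto

lemma l2norm_scale:
  assumes c: "c > 0"
  shows "l2norm a f = sqrt c * l2norm (a/c) (\<lambda>s. f (c * s))"
  unfolding l2norm_def using G2[OF c, where f="\<lambda>t. (cmod (f t))\<^sup>2" and a=a]
  by (simp add: real_sqrt_mult)

lemma l2inner_scale:
  assumes c: "c > 0"
  shows "l2inner a f g = of_real c * l2inner (a/c) (\<lambda>s. f (c * s)) (\<lambda>s. g (c * s))"
  unfolding l2inner_def using G2[OF c, where f="\<lambda>t. f t * cnj (g t)" and a=a]
  by (simp add: scaleR_conv_of_real)

lemma l2eq_scale: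
  assumes c: "c > 0" and "l2eq a f g"
  shows "l2eq (a/c) (\<lambda>s. f (c * s)) (\<lambda>s. g (c * s))"
  using G3[OF c, where a=a and P="\<lambda>t. f t = g t"] assms(2) unfolding l2eq_def by simp

lemma L2_cmult:
  assumes f: "f \<in> L2 a"
  shows "(\<lambda>t. k * f t) \<in> L2 a"
proof -
  have "(\<lambda>t. (cmod (k * f t))\<^sup>2) = (\<lambda>t. (cmod k)\<^sup>2 * (cmod (f t))\<^sup>2)"
    by (simp add: norm_mult power_mult_distrib)
  then show ?thesis using f unfolding L2_def by auto
qed

lemma l2norm_cmult: "l2norm a (\<lambda>t. k * f t) = cmod k * l2norm a f"
proof -
  have "(\<lambda>t. (cmod (k * f t))\<^sup>2) = (\<lambda>t. (cmod k)\<^sup>2 * (cmod (f t))\<^sup>2)"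
    by (simp add: norm_mult power_mult_distrib)
  then show ?thesis unfolding l2norm_def by (simp add: real_sqrt_mult)
qed

context fixes \<eta> :: real assumes eta: "\<eta> > 0"
begin

lemma L2_P: "f \<in> L2 \<eta> \<Longrightarrow> (\<lambda>s. f (\<eta> * s)) \<in> L2 1"
  using L2_scale[OF eta, of f \<eta>] eta by simp

lemma L2_Q: "g \<in> L2 1 \<Longrightarrow> (\<lambda>t. g (t / \<eta>)) \<in> L2 \<eta>"
  using L2_scale[of "1/\<eta>" g 1] eta by simp

lemma l2norm_P: "l2norm \<eta> f = sqrt \<eta> * l2norm 1 (\<lambda>s. f (\<eta> * s))"
  using l2norm_scale[OF eta, of \<eta> f] eta by simp

lemma l2norm_Q: "l2norm \<eta> (\<lambda>t. g (t / \<eta>)) = sqrt \<eta> * l2norm 1 g"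
  using l2norm_P[of "\<lambda>t. g (t / \<eta>)"] eta by simp

lemma l2inner_Q: "l2inner \<eta> (\<lambda>t. g (t / \<eta>)) (\<lambda>t. h (t / \<eta>)) = of_real \<eta> * l2inner 1 g h"
  using l2inner_scale[OF eta, of \<eta> "\<lambda>t. g (t / \<eta>)" "\<lambda>t. h (t / \<eta>)"] eta by simp

lemma l2eq_Q: "l2eq 1 g h \<Longrightarrow> l2eq \<eta> (\<lambda>t. g (t / \<eta>)) (\<lambda>t. h (t / \<eta>))"
  using l2eq_scale[of "1/\<eta>" 1 g h] eta by simp

end

lemma l2eq_refl: "l2eq a f f" unfolding l2eq_def by simp

lemma bop_transfer:
  fixes \<eta> :: real and \<alpha> \<beta> :: complex
  assumes eta: "\<eta> > 0" and T: "bounded_op 1 T"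
  shows "bounded_op \<eta> (\<lambda>f t. \<alpha> * T (\<lambda>s. \<beta> * f (\<eta> * s)) (t / \<eta>))"
proof -
  note Tm = T[unfolded bounded_op_def]
  from Tm obtain C where C: "\<And>f. f \<in> L2 1 \<Longrightarrow> l2norm 1 (T f) \<le> C * l2norm 1 f" by blast
  have Fin: "(\<lambda>s. \<beta> * f (\<eta> * s)) \<in> L2 1" if "f \<in> L2 \<eta>" for f
    using L2_cmult[OF L2_P[OF eta that]] .
  show ?thesis unfolding bounded_op_def
  proof (intro conjI ballI allI)
    fix f assume f: "f \<in> L2 \<eta>"
    show "(\<lambda>t. \<alpha> * T (\<lambda>s. \<beta> * f (\<eta> * s)) (t / \<eta>)) \<in> L2 \<eta>"
      using L2_cmult[OF L2_Q[OF eta]] Fin[OF f] Tm by blast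
  next
    fix f g assume f: "f \<in> L2 \<eta>" and g: "g \<in> L2 \<eta>"
    have e: "(\<lambda>s. \<beta> * (f (\<eta> * s) + g (\<eta> * s))) = (\<lambda>s. (\<beta> * f (\<eta> * s)) + (\<beta> * g (\<eta> * s)))"
      by (simp add: distrib_left)
    have "l2eq 1 (T (\<lambda>s. (\<beta> * f (\<eta> * s)) + (\<beta> * g (\<eta> * s))))
        (\<lambda>s. T (\<lambda>s. \<beta> * f (\<eta> * s)) s + T (\<lambda>s. \<beta> * g (\<eta> * s)) s)"
      using conjunct1[OF conjunct2[OF Tm], rule_format, OF Fin[OF f] Fin[OF g]] by simp
    from l2eq_Q[OF eta this] show "l2eq \<eta> (\<lambda>t. \<alpha> * T (\<lambda>s. \<beta> * (f (\<eta> * s) + g (\<eta> * s))) (t / \<eta>))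
        (\<lambda>t. \<alpha> * T (\<lambda>s. \<beta> * f (\<eta> * s)) (t / \<eta>) + \<alpha> * T (\<lambda>s. \<beta> * g (\<eta> * s)) (t / \<eta>))"
      unfolding l2eq_def e by (auto elim!: eventually_mono simp: distrib_left)
  next
    fix f and k :: complex assume f: "f \<in> L2 \<eta>"
    have e: "(\<lambda>s. \<beta> * (k * f (\<eta> * s))) = (\<lambda>s. k * (\<beta> * f (\<eta> * s)))"
      by (simp add: ac_simps)
    have "l2eq 1 (T (\<lambda>s. k * (\<beta> * f (\<eta> * s)))) (\<lambda>s. k * T (\<lambda>s. \<beta> * f (\<eta> * s)) s)"
      using conjunct1[OF conjunct2[OF conjunct2[OF Tm]], rule_format, OF Fin[OF f], of k] by simp
    from l2eq_Q[OF eta this] show "l2eq \<eta> (\<lambda>t. \<alpha> * T (\<lambda>s. \<beta> * (k * f (\<eta> * s))) (t / \<eta>))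
        (\<lambda>t. k * (\<alpha> * T (\<lambda>s. \<beta> * f (\<eta> * s)) (t / \<eta>)))"
      unfolding l2eq_def e by (auto elim!: eventually_mono simp: ac_simps)
  next
    show "\<exists>D. \<forall>f\<in>L2 \<eta>. l2norm \<eta> (\<lambda>t. \<alpha> * T (\<lambda>s. \<beta> * f (\<eta> * s)) (t / \<eta>)) \<le> D * l2norm \<eta> f"
    proof (intro exI ballI)
      fix f assume f: "f \<in> L2 \<eta>"
      have "l2norm \<eta> (\<lambda>t. \<alpha> * T (\<lambda>s. \<beta> * f (\<eta> * s)) (t / \<eta>))
          = cmod \<alpha> * (sqrt \<eta> * l2norm 1 (T (\<lambda>s. \<beta> * f (\<eta> * s))))"
        by (simp add: l2norm_cmult l2norm_Q[OF eta])
      also have "\<dots> \<le> cmod \<alpha> * (sqrt \<eta> * (C * l2norm 1 (\<lambda>s. \<beta> * f (\<eta> * s))))"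
        using C[OF Fin[OF f]] eta by (intro mult_left_mono) auto
      also have "\<dots> = (cmod \<alpha> * C * cmod \<beta>) * (sqrt \<eta> * l2norm 1 (\<lambda>s. f (\<eta> * s)))"
        by (simp add: l2norm_cmult)
      also have "\<dots> = (cmod \<alpha> * C * cmod \<beta>) * l2norm \<eta> f"
        by (simp add: l2norm_P[OF eta])
      finally show "l2norm \<eta> (\<lambda>t. \<alpha> * T (\<lambda>s. \<beta> * f (\<eta> * s)) (t / \<eta>)) \<le> (cmod \<alpha> * C * cmod \<beta>) * l2norm \<eta> f" .
    qed
  qed
qed

lemma binv_transfer:
  fixes \<eta> :: real
  assumes eta: "\<eta> > 0" and T: "bounded_invertible_op 1 T"
  shows "bounded_invertible_op \<eta> (\<lambda>f t. 1 * T (\<lambda>s. of_real (sqrt \<eta>) * f (\<eta> * s)) (t / \<eta>))"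
proof -
  from T obtain S where Tb: "bounded_op 1 T" and Sb: "bounded_op 1 S"
    and inv: "\<And>f. f \<in> L2 1 \<Longrightarrow> l2eq 1 (S (T f)) f \<and> l2eq 1 (T (S f)) f"
    unfolding bounded_invertible_op_def by blast
  have TL: "T f \<in> L2 1" if "f \<in> L2 1" for f using Tb that unfolding bounded_op_def by blast
  have SL: "S f \<in> L2 1" if "f \<in> L2 1" for f using Sb that unfolding bounded_op_def by blast
  have ne: "\<eta> \<noteq> 0" using eta by simp
  have sq: "sqrt \<eta> \<noteq> 0" using eta by simp
  have sqinv: "of_real (1 / sqrt \<eta>) * (of_real (sqrt \<eta>) * y) = (y::complex)" for y
  proof -
    have "of_real (1 / sqrt \<eta>) * of_real (sqrt \<eta>) = (1::complex)"
      using sq by (simp del: of_real_divide add: of_real_mult[symmetric])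
    then show ?thesis by (simp add: mult.assoc[symmetric])
  qed
  have sqinv2: "of_real (sqrt \<eta>) * (of_real (1 / sqrt \<eta>) * y) = (y::complex)" for y
    using sqinv[of y] by (simp add: ac_simps)
  let ?S' = "\<lambda>f t. of_real (1 / sqrt \<eta>) * S (\<lambda>s. 1 * f (\<eta> * s)) (t / \<eta>)"
  have "bounded_op \<eta> ?S'" by (rule bop_transfer[OF eta Sb])
  moreover have "bounded_op \<eta> (\<lambda>f t. 1 * T (\<lambda>s. of_real (sqrt \<eta>) * f (\<eta> * s)) (t / \<eta>))"
    by (rule bop_transfer[OF eta Tb])
  moreover have "l2eq \<eta> (?S' (\<lambda>t. 1 * T (\<lambda>s. of_real (sqrt \<eta>) * f (\<eta> * s)) (t / \<eta>))) f \<and>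
      l2eq \<eta> ((\<lambda>t. 1 * T (\<lambda>s. of_real (sqrt \<eta>) * (?S' f) (\<eta> * s)) (t / \<eta>))) f"
    if f: "f \<in> L2 \<eta>" for f
  proof
    define F where "F = (\<lambda>s. of_real (sqrt \<eta>) * f (\<eta> * s))"
    have FL: "F \<in> L2 1" unfolding F_def by (rule L2_cmult[OF L2_P[OF eta f]])
    have e1: "(\<lambda>s. 1 * (1 * T F (\<eta> * s / \<eta>))) = T F" using ne by simp
    have "l2eq \<eta> (\<lambda>t. S (T F) (t / \<eta>)) (\<lambda>t. F (t / \<eta>))"
      using l2eq_Q[OF eta] inv[OF FL] by blast
    moreover have e2: "(\<lambda>t. of_real (1 / sqrt \<eta>) * S (T F) (t / \<eta>)) = ?S' (\<lambda>t. 1 * T (\<lambda>s. of_real (sqrt \<eta>) * f (\<eta> * s)) (t / \<eta>))"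
      unfolding F_def[symmetric] e1 ..
    moreover have "F (t / \<eta>) = of_real (sqrt \<eta>) * f t" for t
      unfolding F_def using ne by simp
    ultimately show "l2eq \<eta> (?S' (\<lambda>t. 1 * T (\<lambda>s. of_real (sqrt \<eta>) * f (\<eta> * s)) (t / \<eta>))) f"
      unfolding l2eq_def e2[symmetric] using sqinv
      by (auto elim!: eventually_mono)
  next
    define G where "G = (\<lambda>s. f (\<eta> * s))"
    have GL: "G \<in> L2 1" unfolding G_def by (rule L2_P[OF eta f])
    have e1: "(\<lambda>s. of_real (sqrt \<eta>) * (?S' f) (\<eta> * s)) = S G"
    proof
      fix s
      have a: "(\<lambda>s. 1 * f (\<eta> * s)) = G" unfolding G_def by simp
      have b: "\<eta> * s / \<eta> = s" using ne by simp
      have "(?S' f) (\<eta> * s) = of_real (1 / sqrt \<eta>) * S G s" by (simp only: a b)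
      then show "of_real (sqrt \<eta>) * (?S' f) (\<eta> * s) = S G s"
        by (simp only: sqinv2)
    qed
    have "l2eq \<eta> (\<lambda>t. T (S G) (t / \<eta>)) (\<lambda>t. G (t / \<eta>))"
      using l2eq_Q[OF eta] inv[OF GL] by blast
    moreover have "G (t / \<eta>) = f t" for t unfolding G_def using ne by simp
    ultimately show "l2eq \<eta> ((\<lambda>t. 1 * T (\<lambda>s. of_real (sqrt \<eta>) * (?S' f) (\<eta> * s)) (t / \<eta>))) f"
      unfolding l2eq_def e1 by simp
  qed
  ultimately show ?thesis unfolding bounded_invertible_op_def by blast
qed

lemma l2inner_cmult: "l2inner a (\<lambda>t. c * f t) (\<lambda>t. d * g t) = c * cnj d * l2inner a f g"
proof -
  have "(\<lambda>t. c * f t * cnj (d * g t)) = (\<lambda>t. (c * cnj d) * (f t * cnj (g t)))"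
    by (simp add: ac_simps)
  then show ?thesis unfolding l2inner_def by simp
qed

lemma expo_scale: "\<eta> \<noteq> 0 \<Longrightarrow> expo (\<eta> * x) (t / \<eta>) = expo x t"
  unfolding expo_def by (simp add: ac_simps)

lemma fl_le:
  fixes \<eta> x :: real assumes eta: "\<eta> > 0"
  shows "\<eta> * of_int \<lfloor>x / \<eta>\<rfloor> \<le> x"
proof -
  have "of_int \<lfloor>x / \<eta>\<rfloor> * \<eta> \<le> x / \<eta> * \<eta>"
    by (rule mult_right_mono[OF of_int_floor_le]) (use eta in simp)
  then show ?thesis using eta by (simp add: mult.commute)
qed

lemma floor_bounds:
  fixes \<eta> :: real assumes eta: "\<eta> > 0"
  shows "\<bar>\<eta> * of_int \<lfloor>of_int n / \<eta>\<rfloor> - of_int n\<bar> < \<eta>"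
proof -
  have a: "of_int \<lfloor>of_int n / \<eta>\<rfloor> \<le> of_int n / \<eta>" by (rule of_int_floor_le)
  have b: "of_int n / \<eta> < of_int \<lfloor>of_int n / \<eta>\<rfloor> + 1" by (rule real_of_int_floor_add_one_gt)
  have a': "\<eta> * of_int \<lfloor>of_int n / \<eta>\<rfloor> \<le> of_int n" by (rule fl_le[OF eta])
  have "of_int n / \<eta> * \<eta> < (of_int \<lfloor>of_int n / \<eta>\<rfloor> + 1) * \<eta>"
    by (rule mult_strict_right_mono[OF b eta])
  then have "of_int n < (of_int \<lfloor>of_int n / \<eta>\<rfloor> + 1) * \<eta>" using eta by simp
  then have b': "of_int n < \<eta> * of_int \<lfloor>of_int n / \<eta>\<rfloor> + \<eta>" by (simp add: algebra_simps)
  from a' b' show ?thesis by simp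
qed

lemma floor_inj:
  fixes \<eta> :: real assumes eta: "\<eta> > 0" "\<eta> < 1"
  shows "inj (\<lambda>n::int. \<lfloor>of_int n / \<eta>\<rfloor>)"
proof (rule injI)
  fix m n :: int assume e: "\<lfloor>of_int m / \<eta>\<rfloor> = \<lfloor>of_int n / \<eta>\<rfloor>"
  have "\<bar>\<eta> * of_int \<lfloor>of_int m / \<eta>\<rfloor> - of_int m\<bar> < \<eta>" "\<bar>\<eta> * of_int \<lfloor>of_int n / \<eta>\<rfloor> - of_int n\<bar> < \<eta>"
    using floor_bounds[OF eta(1)] by auto
  moreover have "\<eta> * of_int \<lfloor>of_int m / \<eta>\<rfloor> \<le> of_int m" "\<eta> * of_int \<lfloor>of_int n / \<eta>\<rfloor> \<le> of_int n"
    using fl_le[OF eta(1)] by auto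
  ultimately have "\<bar>real_of_int m - of_int n\<bar> < 1" using e eta(2) by (simp add: abs_if split: if_splits)
  then have "\<bar>m - n\<bar> < 1" by linarith
  then show "m = n" by simp
qed

theorem mainTheorem3:
  fixes \<eta> :: real
  assumes "0 < \<eta>" and "\<eta> < 1"
    and "\<forall>\<gamma> :: int \<Rightarrow> real. (\<forall>n. \<bar>\<gamma> n - of_int n\<bar> < \<eta>) \<longrightarrow>
           riesz_basis 1 (UNIV :: int set) (\<lambda>n. expo (\<gamma> n))"
  shows "\<exists>\<Lambda> :: int set. riesz_basis \<eta> \<Lambda> (\<lambda>n. expo (of_int n))"
proof -
  have eta: "\<eta> > 0" by fact
  have ne: "\<eta> \<noteq> 0" using eta by simp
  have sq: "sqrt \<eta> \<noteq> 0" using eta by simp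
  define h where "h = (\<lambda>n::int. \<lfloor>of_int n / \<eta>\<rfloor>)"
  have hinj: "inj h" unfolding h_def by (rule floor_inj[OF assms(1,2)])
  define k where "k = inv h"
  have kh: "k (h n) = n" for n unfolding k_def using hinj by simp
  have "riesz_basis 1 (UNIV :: int set) (\<lambda>n. expo (\<eta> * of_int (h n)))"
    using assms(3)[rule_format, of "\<lambda>n. \<eta> * of_int (h n)"] floor_bounds[OF eta] unfolding h_def by blast
  then obtain u T where onb: "orthonormal_basis 1 (UNIV :: int set) u"
    and Tinv: "bounded_invertible_op 1 T"
    and Tu: "\<And>i. l2eq 1 (T (u i)) (expo (\<eta> * of_int (h i)))"
    unfolding riesz_basis_def by blast
  have uL: "u i \<in> L2 1" for i using onb unfolding orthonormal_basis_def by blast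
  have uo: "l2inner 1 (u i) (u j) = (if i = j then 1 else 0)" for i j
    using onb unfolding orthonormal_basis_def by blast
  have ud: "\<And>f \<epsilon>. f \<in> L2 1 \<Longrightarrow> \<epsilon> > 0 \<Longrightarrow> \<exists>F c. finite F \<and> l2norm 1 (\<lambda>t. f t - (\<Sum>i\<in>F. c i * u i t)) < \<epsilon>"
    using onb unfolding orthonormal_basis_def by blast
  define c1 :: complex where "c1 = of_real (1 / sqrt \<eta>)"
  have c1c: "c1 * cnj c1 = of_real (1 / \<eta>)"
    unfolding c1_def using eta by (simp del: of_real_divide add: of_real_mult[symmetric] real_sqrt_mult[symmetric])
  have c1s: "of_real (sqrt \<eta>) * (c1 * y) = y" for y
  proof -
    have "of_real (sqrt \<eta>) * c1 = (1::complex)"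
      unfolding c1_def using sq by (simp del: of_real_divide add: of_real_mult[symmetric])
    then show ?thesis by (simp add: mult.assoc[symmetric])
  qed
  define u' where "u' = (\<lambda>m t. c1 * u (k m) (t / \<eta>))"
  define T' where "T' = (\<lambda>f t. 1 * T (\<lambda>s. of_real (sqrt \<eta>) * f (\<eta> * s)) (t / \<eta>))"
  have "orthonormal_basis \<eta> (range h) u'"
    unfolding orthonormal_basis_def
  proof (intro conjI ballI allI impI)
    fix i assume "i \<in> range h"
    show "u' i \<in> L2 \<eta>" unfolding u'_def by (rule L2_cmult[OF L2_Q[OF eta uL]])
  next
    fix i j assume i: "i \<in> range h" and j: "j \<in> range h"
    have "l2inner \<eta> (u' i) (u' j) = of_real \<eta> * l2inner 1 (\<lambda>s. c1 * u (k i) s) (\<lambda>s. c1 * u (k j) s)"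
      unfolding u'_def using l2inner_Q[OF eta, of "\<lambda>s. c1 * u (k i) s" "\<lambda>s. c1 * u (k j) s"] by simp
    also have "\<dots> = of_real \<eta> * (c1 * cnj c1) * (if k i = k j then 1 else 0)"
      by (simp add: l2inner_cmult uo mult.assoc)
    also have "\<dots> = (if k i = k j then 1 else 0)"
      using c1c eta by (simp del: of_real_divide add: of_real_mult[symmetric])
    also have "(k i = k j) = (i = j)" using i j kh by auto
    finally show "l2inner \<eta> (u' i) (u' j) = (if i = j then 1 else 0)" .
  next
    fix f and \<epsilon> :: real assume f: "f \<in> L2 \<eta>" and e: "\<epsilon> > 0"
    from ud[OF L2_P[OF eta f], of "\<epsilon> / sqrt \<eta>"] e eta obtain F c where F: "finite F"
      and apx: "l2norm 1 (\<lambda>s. f (\<eta> * s) - (\<Sum>i\<in>F. c i * u i s)) < \<epsilon> / sqrt \<eta>" by auto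
    define c' where "c' = (\<lambda>m. c (k m) * of_real (sqrt \<eta>))"
    define G where "G = (\<lambda>s. f (\<eta> * s) - (\<Sum>i\<in>F. c i * u i s))"
    have "(\<lambda>t. f t - (\<Sum>m\<in>h ` F. c' m * u' m t)) = (\<lambda>t. G (t / \<eta>))"
    proof
      fix t
      have "(\<Sum>m\<in>h ` F. c' m * u' m t) = (\<Sum>i\<in>F. c' (h i) * u' (h i) t)"
        using sum.reindex[OF inj_on_subset[OF hinj subset_UNIV], of "\<lambda>m. c' m * u' m t" F] by simp
      also have "\<dots> = (\<Sum>i\<in>F. c i * u i (t / \<eta>))"
        unfolding c'_def u'_def kh by (intro sum.cong refl) (simp only: mult.assoc c1s)
      finally show "f t - (\<Sum>m\<in>h ` F. c' m * u' m t) = G (t / \<eta>)"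
        using ne by (simp add: G_def)
    qed
    then have "l2norm \<eta> (\<lambda>t. f t - (\<Sum>m\<in>h ` F. c' m * u' m t)) = sqrt \<eta> * l2norm 1 G"
      by (simp only: l2norm_Q[OF eta])
    also have "\<dots> < sqrt \<eta> * (\<epsilon> / sqrt \<eta>)" using apx eta unfolding G_def by (intro mult_strict_left_mono) auto
    also have "\<dots> = \<epsilon>" using sq by simp
    finally show "\<exists>F c. finite F \<and> F \<subseteq> range h \<and> l2norm \<eta> (\<lambda>t. f t - (\<Sum>i\<in>F. c i * u' i t)) < \<epsilon>"
      using F by blast
  qed
  moreover have "bounded_invertible_op \<eta> T'" unfolding T'_def by (rule binv_transfer[OF eta Tinv])
  moreover have "l2eq \<eta> (T' (u' m)) (expo (of_int m))" if m: "m \<in> range h" for m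
  proof -
    from m obtain n where mn: "m = h n" by auto
    have e1: "(\<lambda>s. of_real (sqrt \<eta>) * u' m (\<eta> * s)) = u n"
      unfolding u'_def mn kh using ne by (simp add: c1s)
    have "T' (u' m) = (\<lambda>t. T (u n) (t / \<eta>))" unfolding T'_def e1 by simp
    moreover have "l2eq \<eta> (\<lambda>t. T (u n) (t / \<eta>)) (\<lambda>t. expo (\<eta> * of_int (h n)) (t / \<eta>))"
      by (rule l2eq_Q[OF eta Tu])
    moreover have "(\<lambda>t. expo (\<eta> * of_int (h n)) (t / \<eta>)) = expo (of_int m)"
      unfolding mn using expo_scale[OF ne] by auto
    ultimately show ?thesis by simp
  qed
  ultimately have "riesz_basis \<eta> (range h) (\<lambda>n. expo (of_int n))"
    unfolding riesz_basis_def by blast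
  then show ?thesis by blast
qed
end
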